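(* Let $C_6$ be the set of $6$-cycles in $S_6$ and $C_{24}^0$ the set of permutations of $\{1,\dots,6\}$ of the form $(1\,x_2)(x_3\,x_4\,x_5\,x_6)$ with $\{x_2,\dots,x_6\}=\{2,\dots,6\}$. For $\sigma=(1\,x_2)(x_3\,x_4\,x_5\,x_6)\in C_{24}^0$ define $$f(\sigma)=\{\sigma,\ (1\,x_3\,x_2\,x_5\,x_4\,x_6),\ (1\,x_4\,x_2\,x_6\,x_5\,x_3),\ (1\,x_5\,x_2\,x_3\,x_6\,x_4),\ (1\,x_6\,x_2\,x_4\,x_3\,x_5)\}$$ (this is well defined, i.e., independent of the cyclic representation of the $4$-cycle). Then for each $\sigma\in C_{24}^0$ the permutation matrices of the five elements of $f(\sigma)$ sum to $J_6-I_6$ (i.e., for every $i\ne j$ exactly one element of $f(\sigma)$ maps $i$ to $j$), and the sets $f(\sigma)$, $\sigma\in C_{24}^0$, are pairwise disjoint with union $C_{24}^0\cup C_6$. Hence $\{f(\sigma):\sigma\in C_{24}^0\}$ is a partition of $C_{24}^0\cup C_6$ into $30$ subsets, each a $1$-factorization of $L_{6,1}$.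
   Context: Permutations are written in cycle notation; the permutation matrix of $\pi$ has a $1$ in position $(i,\pi(i))$. $J_6$ is the $6\times6$ all-ones matrix and $I_6$ the identity. $L_{6,1}=K_{6,6}-6K_{1,1}$ has biadjacency matrix $J_6-I_6$; a $1$-factorization of it is a set of derangement permutation matrices summing to $J_6-I_6$. *)

theory Defs
  imports "HOL-Combinatorics.Cycles"
begin

text \<open>Permutations of {1..6} are functions nat => nat; the cycle (a1 a2 ... ak)
  is cycle_of_list [a1,...,ak], mapping a1 to a2, ..., ak to a1.\<close>

definition C6 :: "(nat \<Rightarrow> nat) set" where
  "C6 = {cycle_of_list cs | cs. distinct cs \<and> set cs = {1..6::nat}}"

definition rep :: "nat \<Rightarrow> nat \<Rightarrow> nat \<Rightarrow> nat \<Rightarrow> nat \<Rightarrow> bool" where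
  "rep x2 x3 x4 x5 x6 \<longleftrightarrow> distinct [x2,x3,x4,x5,x6] \<and> set [x2,x3,x4,x5,x6] = {2..6}"

definition sig :: "nat \<Rightarrow> nat \<Rightarrow> nat \<Rightarrow> nat \<Rightarrow> nat \<Rightarrow> nat \<Rightarrow> nat" where
  "sig x2 x3 x4 x5 x6 = cycle_of_list [1,x2] \<circ> cycle_of_list [x3,x4,x5,x6]"

definition C24_0 :: "(nat \<Rightarrow> nat) set" where
  "C24_0 = {sig x2 x3 x4 x5 x6 | x2 x3 x4 x5 x6. rep x2 x3 x4 x5 x6}"

definition fset :: "nat \<Rightarrow> nat \<Rightarrow> nat \<Rightarrow> nat \<Rightarrow> nat \<Rightarrow> (nat \<Rightarrow> nat) set" where
  "fset x2 x3 x4 x5 x6 =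
     {sig x2 x3 x4 x5 x6,
      cycle_of_list [1,x3,x2,x5,x4,x6],
      cycle_of_list [1,x4,x2,x6,x5,x3],
      cycle_of_list [1,x5,x2,x3,x6,x4],
      cycle_of_list [1,x6,x2,x4,x3,x5]}"

end

theory Submission
  imports Defs "HOL-Combinatorics.Multiset_Permutations"
begin

lemma cyc_map: "distinct cs \<Longrightarrow> map (cycle_of_list cs) cs = rotate1 cs"
  using cyclic_rotation[of cs 1] by simp

lemma repD:
  assumes "rep a b c d e"
  shows "distinct [1,a,b,c,d,e]" "{1..6::nat} = {1,a,b,c,d,e}"
proof -
  have s: "{a,b,c,d,e} = {2..6::nat}" "distinct [a,b,c,d,e]" using assms unfolding rep_def by auto
  have "1 \<notin> {2..6::nat}" by simp
  with s show "distinct [1,a,b,c,d,e]" by (auto simp del: atLeastAtMost_iff)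
  have "{1..6::nat} = insert 1 {2..6}" by auto
  with s show "{1..6::nat} = {1,a,b,c,d,e}" by simp
qed

lemma rep_rot: assumes "rep a b c d e" shows "rep a c d e b"
proof -
  have 1: "set [a,c,d,e,b] = set [a,b,c,d,e]" by auto
  have 2: "distinct [a,c,d,e,b]" using assms unfolding rep_def by auto
  show ?thesis using assms 1 2 unfolding rep_def by (simp only:)
qed

lemma cyc4: assumes "distinct [u1,u2,u3,u4]" shows "cycle_of_list [u1,u2,u3,u4] u1 = u2 \<and> cycle_of_list [u1,u2,u3,u4] u2 = u3 \<and> cycle_of_list [u1,u2,u3,u4] u3 = u4 \<and> cycle_of_list [u1,u2,u3,u4] u4 = u1"
proof -
  have "map (cycle_of_list [u1,u2,u3,u4]) [u1,u2,u3,u4] = rotate1 [u1,u2,u3,u4]"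
    by (rule cyc_map[OF assms])
  then show ?thesis by (simp only: list.map rotate1.simps append.simps list.inject)
qed

lemma cyc6: assumes "distinct [u1,u2,u3,u4,u5,u6]" shows "cycle_of_list [u1,u2,u3,u4,u5,u6] u1 = u2 \<and> cycle_of_list [u1,u2,u3,u4,u5,u6] u2 = u3 \<and> cycle_of_list [u1,u2,u3,u4,u5,u6] u3 = u4 \<and> cycle_of_list [u1,u2,u3,u4,u5,u6] u4 = u5 \<and> cycle_of_list [u1,u2,u3,u4,u5,u6] u5 = u6 \<and> cycle_of_list [u1,u2,u3,u4,u5,u6] u6 = u1"
proof -
  have "map (cycle_of_list [u1,u2,u3,u4,u5,u6]) [u1,u2,u3,u4,u5,u6] = rotate1 [u1,u2,u3,u4,u5,u6]"
    by (rule cyc_map[OF assms])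
  then show ?thesis by (simp only: list.map rotate1.simps append.simps list.inject)
qed

declare cycle_of_list.simps[simp del]

definition fixo :: "(nat \<Rightarrow> nat) \<Rightarrow> bool" where
  "fixo p \<longleftrightarrow> (\<forall>n. n \<notin> {1..6} \<longrightarrow> p n = n)"

lemma fixo_cyc: assumes "set cs \<subseteq> {1..6}" shows "fixo (cycle_of_list cs)"
  unfolding fixo_def
proof (intro allI impI)
  fix n assume "n \<notin> {1..6::nat}"
  then have "n \<notin> set cs" using assms by (meson subsetD)
  then show "cycle_of_list cs n = n" by (rule id_outside_supp)
qed

lemma fixo_comp: "fixo p \<Longrightarrow> fixo q \<Longrightarrow> fixo (p \<circ> q)"
  unfolding fixo_def by simp

lemma ext6:
  assumes "fixo p" "fixo q" "{1..6::nat} = {u1,u2,u3,u4,u5,u6}"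
    "p u1 = q u1" "p u2 = q u2" "p u3 = q u3" "p u4 = q u4" "p u5 = q u5" "p u6 = q u6"
  shows "p = q"
proof
  fix n show "p n = q n"
  proof (cases "n \<in> {1..6}")
    case True then show ?thesis using assms(3-) by auto
  next
    case False then show ?thesis using assms(1,2) unfolding fixo_def by simp
  qed
qed

context
  fixes a b c d e :: nat
  assumes R: "rep a b c d e"
begin

lemma D: "distinct [1,a,b,c,d,e]" using repD[OF R] by blast
lemma S: "{1..6::nat} = {1,a,b,c,d,e}" using repD[OF R] by blast
lemma Sub: "{1,a,b,c,d,e} \<subseteq> {1..6::nat}" using S by simp

lemma sig_vals: "sig a b c d e 1 = a" "sig a b c d e a = 1" "sig a b c d e b = c"
  "sig a b c d e c = d" "sig a b c d e d = e" "sig a b c d e e = b"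
proof -
  have m2: "map (cycle_of_list [1,a]) [1,a] = [a,1]" using cyc_map[of "[1,a]"] D by simp
  have m4: "map (cycle_of_list [b,c,d,e]) [b,c,d,e] = [c,d,e,b]" using cyc4[of b c d e] D by simp
  have o4: "cycle_of_list [b,c,d,e] 1 = 1" "cycle_of_list [b,c,d,e] a = a" using D by (auto intro!: id_outside_supp)
  have o2: "cycle_of_list [1,a] x = x" if "x \<in> {b,c,d,e}" for x using D that by (auto intro!: id_outside_supp)
  show "sig a b c d e 1 = a" "sig a b c d e a = 1" "sig a b c d e b = c"
    "sig a b c d e c = d" "sig a b c d e d = e" "sig a b c d e e = b"
    unfolding sig_def using m2 m4 o4 o2 by auto
qed

lemma fixo_sig: "fixo (sig a b c d e)"
  unfolding sig_def using Sub by (intro fixo_comp fixo_cyc) auto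

end

lemma sig_rot: assumes R: "rep a b c d e" shows "sig a b c d e = sig a c d e b"
  using sig_vals[OF R] sig_vals[OF rep_rot[OF R]] fixo_sig[OF R] fixo_sig[OF rep_rot[OF R]] S[OF R]
  by (intro ext6[of _ _ 1 a b c d e]) auto



definition own :: "(nat \<Rightarrow> nat) \<Rightarrow> (nat \<Rightarrow> nat)" where
  "own p = (if p (p 1) = 1 then p else
     sig (p (p 1)) (p 1) (p (p (p (p 1)))) (p (p (p 1))) (p (p (p (p (p 1))))))"

context
  fixes a b c d e :: nat
  assumes R: "rep a b c d e"
begin

lemma DD: "1 \<noteq> a" "1 \<noteq> b" "1 \<noteq> c" "1 \<noteq> d" "1 \<noteq> e" "a \<noteq> b" "a \<noteq> c" "a \<noteq> d" "a \<noteq> e"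
  "b \<noteq> c" "b \<noteq> d" "b \<noteq> e" "c \<noteq> d" "c \<noteq> e" "d \<noteq> e"
  "a \<noteq> 1" "b \<noteq> 1" "c \<noteq> 1" "d \<noteq> 1" "e \<noteq> 1" "b \<noteq> a" "c \<noteq> a" "d \<noteq> a" "e \<noteq> a"
  "c \<noteq> b" "d \<noteq> b" "e \<noteq> b" "d \<noteq> c" "e \<noteq> c" "e \<noteq> d"
  using D[OF R] by auto

lemma V1: "cycle_of_list [1,b,a,d,c,e] 1 = b" "cycle_of_list [1,b,a,d,c,e] b = a"
  "cycle_of_list [1,b,a,d,c,e] a = d" "cycle_of_list [1,b,a,d,c,e] d = c"
  "cycle_of_list [1,b,a,d,c,e] c = e" "cycle_of_list [1,b,a,d,c,e] e = 1"
  using cyc6[of 1 b a d c e] D[OF R] by auto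
lemma V2: "cycle_of_list [1,c,a,e,d,b] 1 = c" "cycle_of_list [1,c,a,e,d,b] c = a"
  "cycle_of_list [1,c,a,e,d,b] a = e" "cycle_of_list [1,c,a,e,d,b] e = d"
  "cycle_of_list [1,c,a,e,d,b] d = b" "cycle_of_list [1,c,a,e,d,b] b = 1"
  using cyc6[of 1 c a e d b] D[OF R] by auto
lemma V3: "cycle_of_list [1,d,a,b,e,c] 1 = d" "cycle_of_list [1,d,a,b,e,c] d = a"
  "cycle_of_list [1,d,a,b,e,c] a = b" "cycle_of_list [1,d,a,b,e,c] b = e"
  "cycle_of_list [1,d,a,b,e,c] e = c" "cycle_of_list [1,d,a,b,e,c] c = 1"
  using cyc6[of 1 d a b e c] D[OF R] by auto
lemma V4: "cycle_of_list [1,e,a,c,b,d] 1 = e" "cycle_of_list [1,e,a,c,b,d] e = a"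
  "cycle_of_list [1,e,a,c,b,d] a = c" "cycle_of_list [1,e,a,c,b,d] c = b"
  "cycle_of_list [1,e,a,c,b,d] b = d" "cycle_of_list [1,e,a,c,b,d] d = 1"
  using cyc6[of 1 e a c b d] D[OF R] by auto

lemmas DDs = DD DD[unfolded One_nat_def]
lemmas VV0 = sig_vals[OF R] V1 V2 V3 V4
lemmas VV = VV0 VV0[unfolded One_nat_def]

lemma own_fset: "p \<in> fset a b c d e \<Longrightarrow> own p = sig a b c d e"
proof -
  have r1: "rep a c d e b" using rep_rot[OF R] .
  have r2: "rep a d e b c" using rep_rot[OF r1] .
  have e1: "sig a b c d e = sig a c d e b" using sig_rot[OF R] .
  have e2: "sig a c d e b = sig a d e b c" using sig_rot[OF r1] .
  have e3: "sig a d e b c = sig a e b c d" using sig_rot[OF r2] .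
  have o0: "own (sig a b c d e) = sig a b c d e" by (simp add: own_def VV DDs)
  have o1: "own (cycle_of_list [1,b,a,d,c,e]) = sig a b c d e" by (simp add: own_def VV DDs)
  have o2: "own (cycle_of_list [1,c,a,e,d,b]) = sig a c d e b" by (simp add: own_def VV DDs)
  have o3: "own (cycle_of_list [1,d,a,b,e,c]) = sig a d e b c" by (simp add: own_def VV DDs)
  have o4: "own (cycle_of_list [1,e,a,c,b,d]) = sig a e b c d" by (simp add: own_def VV DDs)
  assume "p \<in> fset a b c d e"
  then show ?thesis unfolding fset_def using o0 o1 o2 o3 o4 e1 e2 e3
    by auto
qed

lemma Lfset: "fset a b c d e = set [sig a b c d e, cycle_of_list [1,b,a,d,c,e],
   cycle_of_list [1,c,a,e,d,b], cycle_of_list [1,d,a,b,e,c], cycle_of_list [1,e,a,c,b,d]]"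
  unfolding fset_def by simp

lemma Ldist: "distinct [sig a b c d e, cycle_of_list [1,b,a,d,c,e],
   cycle_of_list [1,c,a,e,d,b], cycle_of_list [1,d,a,b,e,c], cycle_of_list [1,e,a,c,b,d]]"
proof -
  have "distinct (map (\<lambda>p. p 1) [sig a b c d e, cycle_of_list [1,b,a,d,c,e],
   cycle_of_list [1,c,a,e,d,b], cycle_of_list [1,d,a,b,e,c], cycle_of_list [1,e,a,c,b,d]])"
    using D[OF R] by (simp add: VV)
  then show ?thesis using distinct_map by blast
qed

lemma card5: "card (fset a b c d e) = 5"
  unfolding Lfset using distinct_card[OF Ldist] by simp

lemma matrix: "\<forall>i\<in>{1..6::nat}. \<forall>j\<in>{1..6::nat}.
           card {p \<in> fset a b c d e. p i = j} = (if i = j then 0 else 1)"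
proof (intro ballI)
  fix i j :: nat assume i: "i \<in> {1..6}" and j: "j \<in> {1..6}"
  let ?L = "[sig a b c d e, cycle_of_list [1,b,a,d,c,e],
   cycle_of_list [1,c,a,e,d,b], cycle_of_list [1,d,a,b,e,c], cycle_of_list [1,e,a,c,b,d]]"
  have "{p \<in> fset a b c d e. p i = j} = set (filter (\<lambda>p. p i = j) ?L)"
    unfolding Lfset by auto
  then have "card {p \<in> fset a b c d e. p i = j} = length (filter (\<lambda>p. p i = j) ?L)"
    using distinct_card[of "filter (\<lambda>p. p i = j) ?L"] Ldist by simp
  moreover have "i = 1 \<or> i = a \<or> i = b \<or> i = c \<or> i = d \<or> i = e" using i S[OF R] by blast
  moreover have "j = 1 \<or> j = a \<or> j = b \<or> j = c \<or> j = d \<or> j = e" using j S[OF R] by blast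
  ultimately show "card {p \<in> fset a b c d e. p i = j} = (if i = j then 0 else 1)"
    by (elim disjE) (simp_all add: VV DDs)
qed

end

lemma fset_rot: assumes R: "rep a b c d e" shows "fset a b c d e = fset a c d e b"
  unfolding fset_def using sig_rot[OF R] by auto

lemma welldef:
  assumes Rx: "rep x2 x3 x4 x5 x6" and Ry: "rep y2 y3 y4 y5 y6"
    and E: "sig x2 x3 x4 x5 x6 = sig y2 y3 y4 y5 y6"
  shows "fset x2 x3 x4 x5 x6 = fset y2 y3 y4 y5 y6"
proof -
  note X = sig_vals[OF Rx] and Y = sig_vals[OF Ry]
  have h2: "x2 = y2" using X(1) Y(1) E by simp
  have "y3 \<in> {1,x2,x3,x4,x5,x6}" using S[OF Rx] S[OF Ry] by auto
  moreover have "y3 \<noteq> 1" "y3 \<noteq> x2" using DD[OF Ry] h2 by auto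
  ultimately have "y3 = x3 \<or> y3 = x4 \<or> y3 = x5 \<or> y3 = x6" by auto
  moreover have r1: "rep x2 x4 x5 x6 x3" using rep_rot[OF Rx] .
  moreover have r2: "rep x2 x5 x6 x3 x4" using rep_rot[OF r1] .
  moreover have f1: "fset x2 x3 x4 x5 x6 = fset x2 x4 x5 x6 x3" using fset_rot[OF Rx] .
  moreover have f2: "fset x2 x4 x5 x6 x3 = fset x2 x5 x6 x3 x4" using fset_rot[OF r1] .
  moreover have f3: "fset x2 x5 x6 x3 x4 = fset x2 x6 x3 x4 x5" using fset_rot[OF r2] .
  ultimately show ?thesis using X Y E h2 by (smt (verit))
qed

lemma disj:
  assumes Rx: "rep x2 x3 x4 x5 x6" and Ry: "rep y2 y3 y4 y5 y6"
    and p: "p \<in> fset x2 x3 x4 x5 x6" "p \<in> fset y2 y3 y4 y5 y6"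
  shows "sig x2 x3 x4 x5 x6 = sig y2 y3 y4 y5 y6"
  using own_fset[OF Rx p(1)] own_fset[OF Ry p(2)] by simp


lemma C6_in:
  assumes cs: "distinct cs" "set cs = {1..6::nat}"
  shows "\<exists>a b c d e. rep a b c d e \<and> cycle_of_list cs \<in> fset a b c d e"
proof -
  have len: "length cs = 6" using distinct_card[OF cs(1)] cs(2) by simp
  have "1 \<in> set cs" using cs(2) by simp
  then obtain i where i: "i < length cs" "cs ! i = 1" by (metis in_set_conv_nth)
  define rs where "rs = rotate i cs"
  have ceq: "cycle_of_list cs = cycle_of_list rs" unfolding rs_def using cycle_of_list_rotate_independent cs(1) by blast
  have rl: "length rs = 6" unfolding rs_def using len by simp
  have "hd (rotate i cs) = cs ! (i mod length cs)" using len hd_rotate_conv_nth[of cs i] by fastforce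
  then have rh: "hd rs = 1" unfolding rs_def using i by simp
  have rd: "distinct rs" "set rs = {1..6}" unfolding rs_def using cs by simp_all
  have "\<exists>v1 v2 v3 v4 v5 v6. rs = [v1,v2,v3,v4,v5,v6]" using rl
    by (simp add: length_Suc_conv numeral_eq_Suc) blast
  then obtain v1 u2 u3 u4 u5 u6 where rsu0: "rs = [v1,u2,u3,u4,u5,u6]" by blast
  with rh have rsu: "rs = [1,u2,u3,u4,u5,u6]" by simp
  have dd1: "distinct [1,u2,u3,u4,u5,u6]" using rd(1) unfolding rsu .
  have dd2: "{1,u2,u3,u4,u5,u6} = {1..6::nat}" using rd(2) unfolding rsu by simp
  have "rep u3 u2 u5 u4 u6" unfolding rep_def
  proof
    show "distinct [u3, u2, u5, u4, u6]" using dd1 by auto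
    have "{u2,u3,u4,u5,u6} = {1,u2,u3,u4,u5,u6} - {1}" using dd1 by auto
    also have "\<dots> = {1..6} - {1}" using dd2 by simp
    also have "\<dots> = {2..6::nat}" by (auto simp: atLeastAtMost_iff)
    finally show "set [u3, u2, u5, u4, u6] = {2..6}" by (simp add: insert_commute)
  qed
  moreover have "cycle_of_list cs \<in> fset u3 u2 u5 u4 u6" unfolding fset_def ceq rsu by simp
  ultimately show ?thesis by blast
qed

lemma in_U: assumes "rep a b c d e" "p \<in> fset a b c d e"
  shows "p \<in> \<Union> {fset x2 x3 x4 x5 x6 | x2 x3 x4 x5 x6. rep x2 x3 x4 x5 x6}"
proof (rule UnionI[of "fset a b c d e"])
  show "fset a b c d e \<in> {fset x2 x3 x4 x5 x6 | x2 x3 x4 x5 x6. rep x2 x3 x4 x5 x6}"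
    using assms(1) by blast
qed (rule assms(2))

lemma union: "\<Union> {fset x2 x3 x4 x5 x6 | x2 x3 x4 x5 x6. rep x2 x3 x4 x5 x6} = C24_0 \<union> C6"
proof (intro equalityI subsetI)
  fix p assume "p \<in> \<Union> {fset x2 x3 x4 x5 x6 | x2 x3 x4 x5 x6. rep x2 x3 x4 x5 x6}"
  then obtain a b c d e where R: "rep a b c d e" and p: "p \<in> fset a b c d e" by blast
  have dd: "distinct [1,a,b,c,d,e]" "{1..6::nat} = {1,a,b,c,d,e}" using D[OF R] S[OF R] by auto
  have c: "cycle_of_list cs \<in> C6" if "distinct cs" "set cs = {1..6}" for cs
    unfolding C6_def using that by blast
  have s: "sig a b c d e \<in> C24_0" unfolding C24_0_def using R by blast
  have s1: "set [1,b,a,d,c,e] = {1..6}" "set [1,c,a,e,d,b] = {1..6}"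
    "set [1,d,a,b,e,c] = {1..6}" "set [1,e,a,c,b,d] = {1..6}"
    unfolding dd(2) by auto
  have d1: "distinct [1,b,a,d,c,e]" "distinct [1,c,a,e,d,b]"
    "distinct [1,d,a,b,e,c]" "distinct [1,e,a,c,b,d]" using dd(1) by auto
  have "p = sig a b c d e \<or> p = cycle_of_list [1,b,a,d,c,e] \<or> p = cycle_of_list [1,c,a,e,d,b]
    \<or> p = cycle_of_list [1,d,a,b,e,c] \<or> p = cycle_of_list [1,e,a,c,b,d]"
    using p unfolding fset_def by blast
  then show "p \<in> C24_0 \<union> C6" using s c[OF d1(1) s1(1)] c[OF d1(2) s1(2)] c[OF d1(3) s1(3)] c[OF d1(4) s1(4)]
    by blast
next
  fix p assume "p \<in> C24_0 \<union> C6"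
  then show "p \<in> \<Union> {fset x2 x3 x4 x5 x6 | x2 x3 x4 x5 x6. rep x2 x3 x4 x5 x6}"
  proof
    assume "p \<in> C24_0"
    then obtain a b c d e where R: "rep a b c d e" "p = sig a b c d e" unfolding C24_0_def by blast
    then have "p \<in> fset a b c d e" unfolding fset_def by simp
    then show ?thesis by (rule in_U[OF R(1)])
  next
    assume "p \<in> C6"
    then obtain cs where "distinct cs" "set cs = {1..6}" "p = cycle_of_list cs" unfolding C6_def by blast
    then obtain a b c d e where "rep a b c d e" "p \<in> fset a b c d e" using C6_in by metis
    then show ?thesis by (rule in_U)
  qed
qed

definition tab :: "(nat \<Rightarrow> nat) \<Rightarrow> nat list" where "tab p = map p [1..<7]"
definition Plist :: "nat list list" where "Plist = permutations_of_set_list [2,3,4,5,6]"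
definition TS :: "nat list \<Rightarrow> nat list" where
 "TS xs = tab (sig (xs!0) (xs!1) (xs!2) (xs!3) (xs!4))"

lemma card_TS: "card (set (map TS Plist)) = 30"
proof -
  have "length (remdups (map TS Plist)) = 30" by code_simp
  then show ?thesis by (simp add: length_remdups_card_conv)
qed

lemma Plist_mem: "xs \<in> set Plist \<longleftrightarrow> distinct xs \<and> set xs = {2..6::nat}"
proof -
  have "set [2,3,4,5,6::nat] = {2..6}" by auto
  then have "set Plist = permutations_of_set {2..6::nat}"
    unfolding Plist_def using permutations_of_list[of "[2,3,4,5,6::nat]"] by simp
  then show ?thesis unfolding permutations_of_set_def by auto
qed

lemma C24_img: "C24_0 = (\<lambda>xs. sig (xs!0) (xs!1) (xs!2) (xs!3) (xs!4)) ` set Plist"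
proof (intro equalityI subsetI)
  fix p assume "p \<in> C24_0"
  then obtain a b c d e where R: "rep a b c d e" "p = sig a b c d e" unfolding C24_0_def by blast
  then have "[a,b,c,d,e] \<in> set Plist" unfolding Plist_mem rep_def by simp
  then show "p \<in> (\<lambda>xs. sig (xs!0) (xs!1) (xs!2) (xs!3) (xs!4)) ` set Plist"
    using R(2) by force
next
  fix p assume "p \<in> (\<lambda>xs. sig (xs!0) (xs!1) (xs!2) (xs!3) (xs!4)) ` set Plist"
  then obtain xs where xs: "xs \<in> set Plist" "p = sig (xs!0) (xs!1) (xs!2) (xs!3) (xs!4)" by blast
  have "length xs = 5" using xs(1) unfolding Plist_mem using distinct_card by fastforce
  then have "xs = [xs!0, xs!1, xs!2, xs!3, xs!4]"
    by (intro nth_equalityI) (auto simp: numeral_eq_Suc less_Suc_eq)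
  then have "rep (xs!0) (xs!1) (xs!2) (xs!3) (xs!4)" using xs(1) unfolding Plist_mem rep_def
    by (metis)
  then show "p \<in> C24_0" unfolding C24_0_def using xs(2) by blast
qed

lemma tab_inj: "inj_on tab {p. fixo p}"
proof (rule inj_onI)
  fix p q assume "p \<in> {p. fixo p}" "q \<in> {p. fixo p}" "tab p = tab q"
  then have f: "fixo p" "fixo q" and m: "map p [1..<7] = map q [1..<7]" unfolding tab_def by auto
  show "p = q"
  proof
    fix n show "p n = q n"
    proof (cases "n \<in> {1..6}")
      case True then have "n \<in> set [1..<7]" by auto
      then show ?thesis using m map_eq_conv by metis
    next
      case False then show ?thesis using f unfolding fixo_def by simp
    qed
  qed
qed

lemma card_C24: "card C24_0 = 30"
proof -
  have fx: "C24_0 \<subseteq> {p. fixo p}" unfolding C24_0_def using fixo_sig by blast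
  have "tab ` C24_0 = set (map TS Plist)" unfolding C24_img TS_def by auto
  moreover have "card (tab ` C24_0) = card C24_0"
    using inj_on_subset[OF tab_inj fx] card_image by blast
  ultimately show ?thesis using card_TS by simp
qed

definition Pr :: "(nat \<Rightarrow> nat) \<Rightarrow> nat \<times> nat \<times> nat \<times> nat \<times> nat \<Rightarrow> bool" where
  "Pr s t = (case t of (a,b,c,d,e) \<Rightarrow> rep a b c d e \<and> sig a b c d e = s)"

definition G :: "(nat \<Rightarrow> nat) \<Rightarrow> (nat \<Rightarrow> nat) set" where
  "G s = (case (SOME t. Pr s t) of (a,b,c,d,e) \<Rightarrow> fset a b c d e)"

lemma G_sig: assumes R: "rep a b c d e" shows "G (sig a b c d e) = fset a b c d e"
proof -
  define t where "t = (SOME t. Pr (sig a b c d e) t)"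
  have "Pr (sig a b c d e) (a,b,c,d,e)" using R unfolding Pr_def by simp
  then have Pt: "Pr (sig a b c d e) t" unfolding t_def by (rule someI)
  obtain a' b' c' d' e' where tt: "t = (a',b',c',d',e')" by (cases t) blast
  have R': "rep a' b' c' d' e'" and E: "sig a' b' c' d' e' = sig a b c d e"
    using Pt unfolding tt Pr_def by simp_all
  have "G (sig a b c d e) = fset a' b' c' d' e'" unfolding G_def t_def[symmetric] tt by simp
  also have "\<dots> = fset a b c d e" using welldef[OF R' R E] .
  finally show ?thesis .
qed

lemma card30: "card {fset x2 x3 x4 x5 x6 | x2 x3 x4 x5 x6. rep x2 x3 x4 x5 x6} = 30"
proof -
  have img: "{fset x2 x3 x4 x5 x6 | x2 x3 x4 x5 x6. rep x2 x3 x4 x5 x6} = G ` C24_0"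
  proof (intro equalityI subsetI)
    fix F assume "F \<in> {fset x2 x3 x4 x5 x6 | x2 x3 x4 x5 x6. rep x2 x3 x4 x5 x6}"
    then obtain a b c d e where R: "rep a b c d e" "F = fset a b c d e" by blast
    have "sig a b c d e \<in> C24_0" unfolding C24_0_def using R(1) by blast
    moreover have "F = G (sig a b c d e)" using G_sig[OF R(1)] R(2) by simp
    ultimately show "F \<in> G ` C24_0" by blast
  next
    fix F assume "F \<in> G ` C24_0"
    then obtain s where "s \<in> C24_0" "F = G s" by blast
    then obtain a b c d e where R: "rep a b c d e" "F = G (sig a b c d e)" unfolding C24_0_def by blast
    then have "F = fset a b c d e" using G_sig by simp
    then show "F \<in> {fset x2 x3 x4 x5 x6 | x2 x3 x4 x5 x6. rep x2 x3 x4 x5 x6}" using R(1) by blast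
  qed
  have "inj_on G C24_0"
  proof (rule inj_onI)
    fix s t assume "s \<in> C24_0" "t \<in> C24_0" "G s = G t"
    then obtain a b c d e a' b' c' d' e' where R: "rep a b c d e" "s = sig a b c d e"
      "rep a' b' c' d' e'" "t = sig a' b' c' d' e'" "fset a b c d e = fset a' b' c' d' e'"
      unfolding C24_0_def using G_sig by auto
    have "sig a b c d e \<in> fset a b c d e" unfolding fset_def by simp
    then show "s = t" using disj[OF R(1) R(3)] R by auto
  qed
  then show ?thesis unfolding img using card_image card_C24 by metis
qed

theorem mainTheorem5:
  shows
    "(\<forall>x2 x3 x4 x5 x6 y2 y3 y4 y5 y6.
        rep x2 x3 x4 x5 x6 \<and> rep y2 y3 y4 y5 y6 \<and> sig x2 x3 x4 x5 x6 = sig y2 y3 y4 y5 y6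
        \<longrightarrow> fset x2 x3 x4 x5 x6 = fset y2 y3 y4 y5 y6)
   \<and>
     (\<forall>x2 x3 x4 x5 x6. rep x2 x3 x4 x5 x6 \<longrightarrow>
        card (fset x2 x3 x4 x5 x6) = 5 \<and>
        (\<forall>i\<in>{1..6::nat}. \<forall>j\<in>{1..6::nat}.
           card {p \<in> fset x2 x3 x4 x5 x6. p i = j} = (if i = j then 0 else 1)))
   \<and>
     (\<forall>x2 x3 x4 x5 x6 y2 y3 y4 y5 y6.
        rep x2 x3 x4 x5 x6 \<and> rep y2 y3 y4 y5 y6 \<and> sig x2 x3 x4 x5 x6 \<noteq> sig y2 y3 y4 y5 y6
        \<longrightarrow> fset x2 x3 x4 x5 x6 \<inter> fset y2 y3 y4 y5 y6 = {})
   \<and>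
     \<Union> {fset x2 x3 x4 x5 x6 | x2 x3 x4 x5 x6. rep x2 x3 x4 x5 x6} = C24_0 \<union> C6
   \<and>
     card {fset x2 x3 x4 x5 x6 | x2 x3 x4 x5 x6. rep x2 x3 x4 x5 x6} = 30"
proof (intro conjI)
  show "\<forall>x2 x3 x4 x5 x6 y2 y3 y4 y5 y6.
        rep x2 x3 x4 x5 x6 \<and> rep y2 y3 y4 y5 y6 \<and> sig x2 x3 x4 x5 x6 = sig y2 y3 y4 y5 y6
        \<longrightarrow> fset x2 x3 x4 x5 x6 = fset y2 y3 y4 y5 y6"
    using welldef by blast
  show "\<forall>x2 x3 x4 x5 x6. rep x2 x3 x4 x5 x6 \<longrightarrow>
        card (fset x2 x3 x4 x5 x6) = 5 \<and>
        (\<forall>i\<in>{1..6::nat}. \<forall>j\<in>{1..6::nat}.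
           card {p \<in> fset x2 x3 x4 x5 x6. p i = j} = (if i = j then 0 else 1))"
    using card5 matrix by blast
  show "\<forall>x2 x3 x4 x5 x6 y2 y3 y4 y5 y6.
        rep x2 x3 x4 x5 x6 \<and> rep y2 y3 y4 y5 y6 \<and> sig x2 x3 x4 x5 x6 \<noteq> sig y2 y3 y4 y5 y6
        \<longrightarrow> fset x2 x3 x4 x5 x6 \<inter> fset y2 y3 y4 y5 y6 = {}"
    using disj by blast
  show "\<Union> {fset x2 x3 x4 x5 x6 | x2 x3 x4 x5 x6. rep x2 x3 x4 x5 x6} = C24_0 \<union> C6"
    by (rule union)
  show "card {fset x2 x3 x4 x5 x6 | x2 x3 x4 x5 x6. rep x2 x3 x4 x5 x6} = 30"
    by (rule card30)
qed

end
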